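(* Let $\mathbb K$ be a field with $2\in\mathbb K^\times$, $A$ a unital commutative associative $\mathbb K$-algebra, $\mathfrak k$ a $\mathbb K$-Lie algebra and $\mathfrak g=A\otimes\mathfrak k$. For $a,b,c\in A$ and $x,y,z\in\mathfrak k$, $$p_1(\partial(ax\wedge by\wedge cz))\equiv p_1(abc\,x\wedge[y,z])\equiv-p_2(\partial(ax\wedge by\wedge cz))\mod B_2(\mathfrak g).$$ In particular $(p_1+p_2)(B_2(\mathfrak g))\subseteq B_2(\mathfrak g)$.
   Context: $\mathfrak g$ has bracket $[a\otimes x,a'\otimes x']=aa'\otimes[x,x']$, $ax=a\otimes x$, unit $\mathbf 1$. $v\wedge w=\tfrac12(v\otimes w-w\otimes v)$, $v\vee w=\tfrac12(v\otimes w+w\otimes v)$. $\partial:\Lambda^3(\mathfrak g)\to\Lambda^2(\mathfrak g)$, $u\wedge v\wedge w\mapsto[u,v]\wedge w+[v,w]\wedge u+[w,u]\wedge v$, and $B_2(\mathfrak g)=\mathrm{im}\,\partial$. $I_A$ is the kernel of multiplication $S^2(A)\to A$. The subspaces $\Lambda^2(A)\otimes S^2(\mathfrak k)$, $A\otimes\Lambda^2(\mathfrak k)$, $I_A\otimes\Lambda^2(\mathfrak k)$ are regarded as subspaces of $\Lambda^2(\mathfrak g)$ via $a\wedge b\otimes x\vee y\mapsto\tfrac12(ax\wedge by+ay\wedge bx)$, $a\otimes x\wedge y\mapsto\tfrac12(ax\wedge\mathbf 1y-ay\wedge\mathbf 1x)$, $a\vee b\otimes x\wedge y\mapsto\tfrac12(ax\wedge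 by-ay\wedge bx)$; then $\Lambda^2(\mathfrak g)$ is their direct sum and $p_1,p_2,p_3$ are the corresponding projections, given by $p_1(ax\wedge by)=a\wedge b\otimes x\vee y$, $p_2(ax\wedge by)=ab\otimes x\wedge y$, $p_3(ax\wedge by)=(a\vee b-ab\vee\mathbf 1)\otimes x\wedge y$. *)

theory Defs
  imports Complex_Main "HOL-Library.Poly_Mapping"
begin

definition lie_algebra :: "('k::field \<Rightarrow> 'l::ab_group_add \<Rightarrow> 'l) \<Rightarrow> ('l \<Rightarrow> 'l \<Rightarrow> 'l) \<Rightarrow> bool" where
  "lie_algebra sL br \<longleftrightarrow> vector_space sL
     \<and> (\<forall>x y z. br (x + y) z = br x z + br y z)
     \<and> (\<forall>x y z. br x (y + z) = br x y + br x z)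
     \<and> (\<forall>c x y. br (sL c x) y = sL c (br x y))
     \<and> (\<forall>c x y. br x (sL c y) = sL c (br x y))
     \<and> (\<forall>x. br x x = 0)
     \<and> (\<forall>x y z. br x (br y z) + br y (br z x) + br z (br x y) = 0)"

definition comm_algebra :: "('k::field \<Rightarrow> 'a::comm_ring_1 \<Rightarrow> 'a) \<Rightarrow> bool" where
  "comm_algebra sA \<longleftrightarrow> vector_space sA \<and> (\<forall>c a b. sA c (a * b) = sA c a * b)"

definition fsc :: "'k::field \<Rightarrow> ('v \<Rightarrow>\<^sub>0 'k) \<Rightarrow> ('v \<Rightarrow>\<^sub>0 'k)" where
  "fsc c f = Poly_Mapping.map (\<lambda>r. c * r) f"

definition linext :: "('v \<Rightarrow> ('w \<Rightarrow>\<^sub>0 'k::field)) \<Rightarrow> ('v \<Rightarrow>\<^sub>0 'k) \<Rightarrow> ('w \<Rightarrow>\<^sub>0 'k)" where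
  "linext g f = (\<Sum>v\<in>Poly_Mapping.keys f. fsc (Poly_Mapping.lookup f v) (g v))"

(* Lambda^2(g), g = A (x) k, is modelled as the free vector space on 4-tuples
   ((a,x),(b,y)) -- the generator W a x b y representing (a x) \<wedge> (b y) --
   modulo the subspace N2 of multilinearity and antisymmetry relations. *)
definition W :: "'a \<Rightarrow> 'l \<Rightarrow> 'a \<Rightarrow> 'l \<Rightarrow> (('a \<times> 'l) \<times> ('a \<times> 'l)) \<Rightarrow>\<^sub>0 'k::field" where
  "W a x b y = Poly_Mapping.single ((a, x), (b, y)) 1"

definition rel2 :: "('k::field \<Rightarrow> 'a::comm_ring_1 \<Rightarrow> 'a) \<Rightarrow> ('k \<Rightarrow> 'l::ab_group_add \<Rightarrow> 'l)
    \<Rightarrow> ((('a \<times> 'l) \<times> ('a \<times> 'l)) \<Rightarrow>\<^sub>0 'k) set" where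
  "rel2 sA sL =
     {W (a + a') x b y - W a x b y - W a' x b y | a a' x b y. True}
   \<union> {W a (x + x') b y - W a x b y - W a x' b y | a x x' b y. True}
   \<union> {W a x (b + b') y - W a x b y - W a x b' y | a x b b' y. True}
   \<union> {W a x b (y + y') - W a x b y - W a x b y' | a x b y y'. True}
   \<union> {W (sA c a) x b y - fsc c (W a x b y) | c a x b y. True}
   \<union> {W a (sL c x) b y - fsc c (W a x b y) | c a x b y. True}
   \<union> {W a x (sA c b) y - fsc c (W a x b y) | c a x b y. True}
   \<union> {W a x b (sL c y) - fsc c (W a x b y) | c a x b y. True}
   \<union> {W a x b y + W b y a x | a x b y. True}"

(* representative of \<partial>(ax \<wedge> by \<wedge> cz) = [ax,by]\<wedge>cz + [by,cz]\<wedge>ax + [cz,ax]\<wedge>by *)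
definition bd3 :: "('l \<Rightarrow> 'l \<Rightarrow> 'l) \<Rightarrow> 'a::comm_ring_1 \<Rightarrow> 'l \<Rightarrow> 'a \<Rightarrow> 'l \<Rightarrow> 'a \<Rightarrow> 'l
    \<Rightarrow> (('a \<times> 'l) \<times> ('a \<times> 'l)) \<Rightarrow>\<^sub>0 'k::field" where
  "bd3 br a x b y c z = W (a * b) (br x y) c z + W (b * c) (br y z) a x + W (c * a) (br z x) b y"

(* preimage of B_2(g) = im \<partial> in the free space: relations plus boundaries
   (\<Lambda>^3(g) is spanned by the ax \<wedge> by \<wedge> cz) *)
definition B2 :: "('k::field \<Rightarrow> 'a::comm_ring_1 \<Rightarrow> 'a) \<Rightarrow> ('k \<Rightarrow> 'l::ab_group_add \<Rightarrow> 'l)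
    \<Rightarrow> ('l \<Rightarrow> 'l \<Rightarrow> 'l) \<Rightarrow> ((('a \<times> 'l) \<times> ('a \<times> 'l)) \<Rightarrow>\<^sub>0 'k) set" where
  "B2 sA sL br = Modules.module.span fsc (rel2 sA sL \<union> {bd3 br a x b y c z | a x b y c z. True})"

(* p1 followed by the embedding into \<Lambda>^2(g):
   ax \<wedge> by \<mapsto> a\<wedge>b \<otimes> x\<vee>y \<mapsto> 1/2 (ax \<wedge> by + ay \<wedge> bx) *)
definition P1 :: "((('a::comm_ring_1 \<times> 'l) \<times> ('a \<times> 'l)) \<Rightarrow>\<^sub>0 'k::field)
    \<Rightarrow> (('a \<times> 'l) \<times> ('a \<times> 'l)) \<Rightarrow>\<^sub>0 'k" where
  "P1 = linext (\<lambda>((a, x), (b, y)). fsc (1 / 2) (W a x b y + W a y b x))"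

(* p2 followed by the embedding into \<Lambda>^2(g):
   ax \<wedge> by \<mapsto> ab \<otimes> x\<wedge>y \<mapsto> 1/2 (abx \<wedge> 1y - aby \<wedge> 1x) *)
definition P2 :: "((('a::comm_ring_1 \<times> 'l) \<times> ('a \<times> 'l)) \<Rightarrow>\<^sub>0 'k::field)
    \<Rightarrow> (('a \<times> 'l) \<times> ('a \<times> 'l)) \<Rightarrow>\<^sub>0 'k" where
  "P2 = linext (\<lambda>((a, x), (b, y)). fsc (1 / 2) (W (a * b) x 1 y - W (a * b) y 1 x))"

end

theory Submission imports Defs begin

lemma lookup_fsc: "Poly_Mapping.lookup (fsc c f) k = c * Poly_Mapping.lookup f k"
  unfolding fsc_def by (simp add: Poly_Mapping.map.rep_eq when_def)

interpretation fs: module fsc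
  by unfold_locales (auto intro!: poly_mapping_eqI simp: lookup_fsc lookup_add algebra_simps)

lemma linext_superset:
  assumes "finite S" "Poly_Mapping.keys f \<subseteq> S"
  shows "linext g f = (\<Sum>v\<in>S. fsc (Poly_Mapping.lookup f v) (g v))"
  unfolding linext_def
  by (rule sum.mono_neutral_left) (use assms in \<open>auto simp: in_keys_iff\<close>)

lemma linext_add: "linext g (p + q) = linext g p + linext g q"
proof -
  let ?S = "Poly_Mapping.keys p \<union> Poly_Mapping.keys q"
  have "linext g (p + q) = (\<Sum>v\<in>?S. fsc (Poly_Mapping.lookup (p+q) v) (g v))"
    by (rule linext_superset) (auto dest: subsetD[OF keys_add])
  also have "\<dots> = (\<Sum>v\<in>?S. fsc (Poly_Mapping.lookup p v) (g v)) + (\<Sum>v\<in>?S. fsc (Poly_Mapping.lookup q v) (g v))"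
    by (simp add: lookup_add fs.scale_left_distrib sum.distrib)
  also have "\<dots> = linext g p + linext g q"
    by (simp add: linext_superset[symmetric])
  finally show ?thesis .
qed

lemma keys_fsc: "Poly_Mapping.keys (fsc c p) \<subseteq> Poly_Mapping.keys p"
  by (auto simp: in_keys_iff lookup_fsc)

lemma linext_fsc: "linext g (fsc c p) = fsc c (linext g p)"
proof -
  have "linext g (fsc c p) = (\<Sum>v\<in>Poly_Mapping.keys p. fsc (Poly_Mapping.lookup (fsc c p) v) (g v))"
    by (rule linext_superset) (auto simp: keys_fsc)
  also have "\<dots> = fsc c (linext g p)"
    by (simp add: linext_def lookup_fsc fs.scale_sum_right)
  finally show ?thesis .
qed

lemma linext_zero: "linext g 0 = 0"
  by (simp add: linext_def)

lemma linext_neg: "linext g (- p) = - linext g p"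
proof -
  have h: "linext g p + linext g (-p) = 0" using linext_add[of g p "-p"] by (simp add: linext_zero)
  show ?thesis using h by (metis add.commute eq_neg_iff_add_eq_0)
qed

lemma linext_diff: "linext g (p - q) = linext g p - linext g q"
  using linext_add[of g p "-q"] by (simp add: linext_neg)

lemma linext_W: "linext g (W a x b y) = g ((a,x),(b,y))"
  by (simp add: linext_def W_def)

definition L1 :: "((('a::comm_ring_1 \<times> 'l) \<times> ('a \<times> 'l)) \<Rightarrow>\<^sub>0 'k::field) \<Rightarrow> (('a \<times> 'l) \<times> ('a \<times> 'l)) \<Rightarrow>\<^sub>0 'k" where
  "L1 = linext (\<lambda>((a, x), (b, y)). W a x b y + W a y b x)"

definition L2 :: "((('a::comm_ring_1 \<times> 'l) \<times> ('a \<times> 'l)) \<Rightarrow>\<^sub>0 'k::field) \<Rightarrow> (('a \<times> 'l) \<times> ('a \<times> 'l)) \<Rightarrow>\<^sub>0 'k" where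
  "L2 = linext (\<lambda>((a, x), (b, y)). W (a * b) x 1 y - W (a * b) y 1 x)"

lemma linext_half: "linext (\<lambda>v. fsc c (g v)) w = fsc c (linext g w)"
  by (simp add: linext_def fs.scale_sum_right mult.commute)

lemma P1_eq: "P1 w = fsc (1/2::'k::field) (L1 (w :: (('a::comm_ring_1 \<times> 'l) \<times> ('a \<times> 'l)) \<Rightarrow>\<^sub>0 'k))"
proof -
  have h: "P1 = linext (\<lambda>v. fsc (1/2::'k) ((\<lambda>((a, x), (b, y)). W a x b y + W a y b x) v))"
    unfolding P1_def by (simp add: split_def)
  show ?thesis unfolding L1_def by (rule trans[OF fun_cong[OF h] linext_half])
qed

lemma P2_eq: "P2 w = fsc (1/2::'k::field) (L2 (w :: (('a::comm_ring_1 \<times> 'l) \<times> ('a \<times> 'l)) \<Rightarrow>\<^sub>0 'k))"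
proof -
  have h: "P2 = linext (\<lambda>v. fsc (1/2::'k) ((\<lambda>((a, x), (b, y)). W (a * b) x 1 y - W (a * b) y 1 x) v))"
    unfolding P2_def by (simp add: split_def)
  show ?thesis unfolding L2_def by (rule trans[OF fun_cong[OF h] linext_half])
qed

lemma L1_W[simp]: "L1 (W a x b y) = W a x b y + W a y b x"
  by (simp add: L1_def linext_W)
lemma L2_W[simp]: "L2 (W a x b y) = W (a * b) x 1 y - W (a * b) y 1 x"
  by (simp add: L2_def linext_W)
lemma L1_lin[simp]: "L1 (p + q) = L1 p + L1 q" "L1 (p - q) = L1 p - L1 q" "L1 (fsc c p) = fsc c (L1 p)" "L1 0 = 0"
  by (simp_all add: L1_def linext_add linext_diff linext_fsc linext_zero)
lemma L2_lin[simp]: "L2 (p + q) = L2 p + L2 q" "L2 (p - q) = L2 p - L2 q" "L2 (fsc c p) = fsc c (L2 p)" "L2 0 = 0"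
  by (simp_all add: L2_def linext_add linext_diff linext_fsc linext_zero)

lemma bd3_in: "bd3 br a x b y c z \<in> B2 sA sL br"
  unfolding B2_def by (rule fs.span_base) blast

lemma R_in: "r \<in> rel2 sA sL \<Longrightarrow> r \<in> B2 sA sL br"
  unfolding B2_def by (rule fs.span_base) blast

lemma R1: "W (a + a') x b y - W a x b y - W a' x b y \<in> B2 sA sL br"
  by (rule R_in, unfold rel2_def, rule UnI1, rule UnI1, rule UnI1, rule UnI1, rule UnI1, rule UnI1, rule UnI1, rule UnI1, blast)

lemma R2: "W a (x + x') b y - W a x b y - W a x' b y \<in> B2 sA sL br"
  by (rule R_in, unfold rel2_def, rule UnI1, rule UnI1, rule UnI1, rule UnI1, rule UnI1, rule UnI1, rule UnI1, rule UnI2, blast)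

lemma R3: "W a x (b + b') y - W a x b y - W a x b' y \<in> B2 sA sL br"
  by (rule R_in, unfold rel2_def, rule UnI1, rule UnI1, rule UnI1, rule UnI1, rule UnI1, rule UnI1, rule UnI2, blast)

lemma R4: "W a x b (y + y') - W a x b y - W a x b y' \<in> B2 sA sL br"
  by (rule R_in, unfold rel2_def, rule UnI1, rule UnI1, rule UnI1, rule UnI1, rule UnI1, rule UnI2, blast)

lemma R5: "W (sA c a) x b y - fsc c (W a x b y) \<in> B2 sA sL br"
  by (rule R_in, unfold rel2_def, rule UnI1, rule UnI1, rule UnI1, rule UnI1, rule UnI2, blast)

lemma R6: "W a (sL c x) b y - fsc c (W a x b y) \<in> B2 sA sL br"
  by (rule R_in, unfold rel2_def, rule UnI1, rule UnI1, rule UnI1, rule UnI2, blast)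

lemma R7: "W a x (sA c b) y - fsc c (W a x b y) \<in> B2 sA sL br"
  by (rule R_in, unfold rel2_def, rule UnI1, rule UnI1, rule UnI2, blast)

lemma R8: "W a x b (sL c y) - fsc c (W a x b y) \<in> B2 sA sL br"
  by (rule R_in, unfold rel2_def, rule UnI1, rule UnI2, blast)

lemma R9: "W a x b y + W b y a x \<in> B2 sA sL br"
  by (rule R_in, unfold rel2_def, rule UnI2, blast)


lemma eq1: "L1 (bd3 br a x b y c z) - L1 (W (a*b*c) x 1 (br y z)) =
   bd3 br a x b y c z + bd3 br b x c y a z - bd3 br 1 x c y (a*b) z - bd3 br (b*c) x 1 y a z
   - bd3 br b x (c*a) y 1 z + bd3 br (a*b*c) x 1 y 1 z
   + (W (a*b) z c (br x y) + W c (br x y) (a*b) z)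
   + (W (b*c) x a (br y z) + W a (br y z) (b*c) x)
   + (W (c*a) y b (br z x) + W b (br z x) (c*a) y)
   - (W (a*b*c) x 1 (br y z) + W 1 (br y z) (a*b*c) x)"
  by (simp add: bd3_def algebra_simps)

lemma eq2: "L1 (W (a*b*c) x 1 (br y z)) + L2 (bd3 br a x b y c z) =
   bd3 br 1 x (a*b*c) y 1 z + bd3 br 1 x 1 y (a*b*c) z
   - (W (a*b*c) z 1 (br x y) + W 1 (br x y) (a*b*c) z)
   - (W (a*b*c) y 1 (br z x) + W 1 (br z x) (a*b*c) y)"
  by (simp add: bd3_def algebra_simps)

lemma B2_add: "p \<in> B2 sA sL br \<Longrightarrow> q \<in> B2 sA sL br \<Longrightarrow> p + q \<in> B2 sA sL br"
  unfolding B2_def by (rule fs.span_add)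
lemma B2_diff: "p \<in> B2 sA sL br \<Longrightarrow> q \<in> B2 sA sL br \<Longrightarrow> p - q \<in> B2 sA sL br"
  unfolding B2_def by (rule fs.span_diff)
lemma B2_scale: "p \<in> B2 sA sL br \<Longrightarrow> fsc c p \<in> B2 sA sL br"
  unfolding B2_def by (rule fs.span_scale)
lemma B2_zero: "0 \<in> B2 sA sL br"
  unfolding B2_def by (rule fs.span_zero)

lemma Q1: "L1 (W (a + a') x b y - W a x b y - W a' x b y) + L2 (W (a + a') x b y - W a x b y - W a' x b y) \<in> B2 sA sL br"
proof -
  have e: "L1 (W (a + a') x b y - W a x b y - W a' x b y) + L2 (W (a + a') x b y - W a x b y - W a' x b y)
    = (W (a + a') x b y - W a x b y - W a' x b y) + (W (a + a') y b x - W a y b x - W a' y b x)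
    + (W (a*b + a'*b) x 1 y - W (a*b) x 1 y - W (a'*b) x 1 y) - (W (a*b + a'*b) y 1 x - W (a*b) y 1 x - W (a'*b) y 1 x)"
    by (simp add: algebra_simps)
  show ?thesis unfolding e by (intro R1 B2_add B2_diff)
qed

lemma Q2: "L1 (W a (x + x') b y - W a x b y - W a x' b y) + L2 (W a (x + x') b y - W a x b y - W a x' b y) \<in> B2 sA sL br"
proof -
  have e: "L1 (W a (x + x') b y - W a x b y - W a x' b y) + L2 (W a (x + x') b y - W a x b y - W a x' b y)
    = (W a (x + x') b y - W a x b y - W a x' b y) + (W a y b (x + x') - W a y b x - W a y b x')
    + (W (a*b) (x + x') 1 y - W (a*b) x 1 y - W (a*b) x' 1 y) - (W (a*b) y 1 (x + x') - W (a*b) y 1 x - W (a*b) y 1 x')"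
    by (simp add: algebra_simps)
  show ?thesis unfolding e by (intro R2 R4 B2_add B2_diff)
qed

lemma Q3: "L1 (W a x (b + b') y - W a x b y - W a x b' y) + L2 (W a x (b + b') y - W a x b y - W a x b' y) \<in> B2 sA sL br"
proof -
  have e: "L1 (W a x (b + b') y - W a x b y - W a x b' y) + L2 (W a x (b + b') y - W a x b y - W a x b' y)
    = (W a x (b + b') y - W a x b y - W a x b' y) + (W a y (b + b') x - W a y b x - W a y b' x)
    + (W (a*b + a*b') x 1 y - W (a*b) x 1 y - W (a*b') x 1 y) - (W (a*b + a*b') y 1 x - W (a*b) y 1 x - W (a*b') y 1 x)"
    by (simp add: algebra_simps)
  show ?thesis unfolding e by (intro R1 R3 B2_add B2_diff)
qed

lemma Q4: "L1 (W a x b (y + y') - W a x b y - W a x b y') + L2 (W a x b (y + y') - W a x b y - W a x b y') \<in> B2 sA sL br"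
proof -
  have e: "L1 (W a x b (y + y') - W a x b y - W a x b y') + L2 (W a x b (y + y') - W a x b y - W a x b y')
    = (W a x b (y + y') - W a x b y - W a x b y') + (W a (y + y') b x - W a y b x - W a y' b x)
    + (W (a*b) x 1 (y + y') - W (a*b) x 1 y - W (a*b) x 1 y') - (W (a*b) (y + y') 1 x - W (a*b) y 1 x - W (a*b) y' 1 x)"
    by (simp add: algebra_simps)
  show ?thesis unfolding e by (intro R2 R4 B2_add B2_diff)
qed

lemma Q5:
  assumes "comm_algebra sA"
  shows "L1 (W (sA c a) x b y - fsc c (W a x b y)) + L2 (W (sA c a) x b y - fsc c (W a x b y)) \<in> B2 sA sL br"
proof -
  have m0: "sA c a * b = sA c (a * b)" using assms by (simp add: comm_algebra_def)
  have m: "sA c a * b = sA c (a * b)" "b * sA c a = sA c (a * b)" by (metis m0 mult.commute)+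
  have e: "L1 (W (sA c a) x b y - fsc c (W a x b y)) + L2 (W (sA c a) x b y - fsc c (W a x b y))
    = (W (sA c a) x b y - fsc c (W a x b y)) + (W (sA c a) y b x - fsc c (W a y b x))
    + (W (sA c (a*b)) x 1 y - fsc c (W (a*b) x 1 y)) - (W (sA c (a*b)) y 1 x - fsc c (W (a*b) y 1 x))"
    by (simp add: algebra_simps m fs.scale_right_diff_distrib)
  show ?thesis unfolding e by (intro R5 B2_add B2_diff)
qed

lemma Q6: "L1 (W a (sL c x) b y - fsc c (W a x b y)) + L2 (W a (sL c x) b y - fsc c (W a x b y)) \<in> B2 sA sL br"
proof -
  have e: "L1 (W a (sL c x) b y - fsc c (W a x b y)) + L2 (W a (sL c x) b y - fsc c (W a x b y))
    = (W a (sL c x) b y - fsc c (W a x b y)) + (W a y b (sL c x) - fsc c (W a y b x))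
    + (W (a*b) (sL c x) 1 y - fsc c (W (a*b) x 1 y)) - (W (a*b) y 1 (sL c x) - fsc c (W (a*b) y 1 x))"
    by (simp add: algebra_simps fs.scale_right_diff_distrib)
  show ?thesis unfolding e by (intro R6 R8 B2_add B2_diff)
qed

lemma Q7:
  assumes "comm_algebra sA"
  shows "L1 (W a x (sA c b) y - fsc c (W a x b y)) + L2 (W a x (sA c b) y - fsc c (W a x b y)) \<in> B2 sA sL br"
proof -
  have m0: "sA c (b * a) = sA c b * a" using assms unfolding comm_algebra_def by blast
  have m: "a * sA c b = sA c (a * b)" "sA c b * a = sA c (a * b)" by (metis m0 mult.commute)+
  have e: "L1 (W a x (sA c b) y - fsc c (W a x b y)) + L2 (W a x (sA c b) y - fsc c (W a x b y))
    = (W a x (sA c b) y - fsc c (W a x b y)) + (W a y (sA c b) x - fsc c (W a y b x))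
    + (W (sA c (a*b)) x 1 y - fsc c (W (a*b) x 1 y)) - (W (sA c (a*b)) y 1 x - fsc c (W (a*b) y 1 x))"
    by (simp add: algebra_simps m fs.scale_right_diff_distrib)
  show ?thesis unfolding e by (intro R5 R7 B2_add B2_diff)
qed

lemma Q8: "L1 (W a x b (sL c y) - fsc c (W a x b y)) + L2 (W a x b (sL c y) - fsc c (W a x b y)) \<in> B2 sA sL br"
proof -
  have e: "L1 (W a x b (sL c y) - fsc c (W a x b y)) + L2 (W a x b (sL c y) - fsc c (W a x b y))
    = (W a x b (sL c y) - fsc c (W a x b y)) + (W a (sL c y) b x - fsc c (W a y b x))
    + (W (a*b) x 1 (sL c y) - fsc c (W (a*b) x 1 y)) - (W (a*b) (sL c y) 1 x - fsc c (W (a*b) y 1 x))"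
    by (simp add: algebra_simps fs.scale_right_diff_distrib)
  show ?thesis unfolding e by (intro R6 R8 B2_add B2_diff)
qed

lemma Q9: "L1 (W a x b y + W b y a x) + L2 (W a x b y + W b y a x) \<in> B2 sA sL br"
proof -
  have e: "L1 (W a x b y + W b y a x) + L2 (W a x b y + W b y a x)
    = (W a x b y + W b y a x) + (W a y b x + W b x a y)"
    by (simp add: algebra_simps)
  show ?thesis unfolding e by (intro R9 B2_add B2_diff)
qed

lemma part1: "P1 (bd3 br a x b y c z) - P1 (W (a * b * c) x 1 (br y z)) \<in> B2 sA sL br"
proof -
  have "L1 (bd3 br a x b y c z) - L1 (W (a*b*c) x 1 (br y z)) \<in> B2 sA sL br"
    unfolding eq1 by (intro R9 bd3_in B2_add B2_diff)
  then show ?thesis by (simp add: P1_eq fs.scale_right_diff_distrib[symmetric] B2_scale)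
qed

lemma part2: "P1 (W (a * b * c) x 1 (br y z)) + P2 (bd3 br a x b y c z) \<in> B2 sA sL br"
proof -
  have "L1 (W (a*b*c) x 1 (br y z)) + L2 (bd3 br a x b y c z) \<in> B2 sA sL br"
    unfolding eq2 by (intro R9 bd3_in B2_add B2_diff)
  then show ?thesis by (simp add: P1_eq P2_eq fs.scale_right_distrib[symmetric] B2_scale)
qed

theorem lemma2p2:
  fixes sA :: "'k::field \<Rightarrow> 'a::comm_ring_1 \<Rightarrow> 'a"
    and sL :: "'k \<Rightarrow> 'l::ab_group_add \<Rightarrow> 'l"
    and br :: "'l \<Rightarrow> 'l \<Rightarrow> 'l"
  assumes "(2::'k) \<noteq> 0"
    and "comm_algebra sA"
    and "lie_algebra sL br"
  shows "(\<forall>(a::'a) (b::'a) (c::'a) (x::'l) (y::'l) (z::'l).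
            P1 (bd3 br a x b y c z) - P1 (W (a * b * c) x 1 (br y z)) \<in> B2 sA sL br
          \<and> P1 (W (a * b * c) x 1 (br y z)) + P2 (bd3 br a x b y c z) \<in> B2 sA sL br)
       \<and> (\<forall>w\<in>B2 sA sL br. P1 w + P2 w \<in> B2 sA sL br)"
proof (intro conjI allI ballI)
  fix a b c :: 'a and x y z :: 'l
  show "P1 (bd3 br a x b y c z) - P1 (W (a * b * c) x 1 (br y z)) \<in> B2 sA sL br" by (rule part1)
  show "P1 (W (a * b * c) x 1 (br y z)) + P2 (bd3 br a x b y c z) \<in> B2 sA sL br" by (rule part2)
next
  fix w assume w: "w \<in> B2 sA sL br"
  have sub: "fs.subspace {w. L1 w + L2 w \<in> B2 sA sL br}"
    unfolding fs.subspace_def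
  proof (intro conjI ballI allI)
    show "0 \<in> {w. L1 w + L2 w \<in> B2 sA sL br}" by (simp add: B2_zero)
  next
    fix p q assume "p \<in> {w. L1 w + L2 w \<in> B2 sA sL br}" "q \<in> {w. L1 w + L2 w \<in> B2 sA sL br}"
    then have "(L1 p + L2 p) + (L1 q + L2 q) \<in> B2 sA sL br" by (simp add: B2_add)
    then show "p + q \<in> {w. L1 w + L2 w \<in> B2 sA sL br}" by (simp add: algebra_simps)
  next
    fix c p assume "p \<in> {w. L1 w + L2 w \<in> B2 sA sL br}"
    then have "fsc c (L1 p + L2 p) \<in> B2 sA sL br" by (simp add: B2_scale)
    then show "fsc c p \<in> {w. L1 w + L2 w \<in> B2 sA sL br}" by (simp add: fs.scale_right_distrib)
  qed
  have gen: "L1 g + L2 g \<in> B2 sA sL br"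
    if g: "g \<in> rel2 sA sL \<union> {bd3 br a x b y c z | a x b y c z. True}" for g
  proof -
    have bd: "L1 (bd3 br a x b y c z) + L2 (bd3 br a x b y c z) \<in> B2 sA sL br" for a x b y c z
    proof -
      have "(L1 (bd3 br a x b y c z) - L1 (W (a*b*c) x 1 (br y z))) + (L1 (W (a*b*c) x 1 (br y z)) + L2 (bd3 br a x b y c z)) \<in> B2 sA sL br"
        unfolding eq1 eq2 by (intro R9 bd3_in B2_add B2_diff)
      then show ?thesis by simp
    qed
    from g show ?thesis
      unfolding rel2_def
      by (elim UnE CollectE exE conjE; simp only: Q1 Q2 Q3 Q4 Q5[OF assms(2)] Q6 Q7[OF assms(2)] Q8 Q9 bd)
  qed
  have "L1 w + L2 w \<in> B2 sA sL br"
    using w unfolding B2_def[of sA sL br]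
    by (rule fs.span_induct[OF _ sub[unfolded B2_def]]) (use gen[unfolded B2_def] in auto)
  then show "P1 w + P2 w \<in> B2 sA sL br"
    by (simp add: P1_eq P2_eq fs.scale_right_distrib[symmetric] B2_scale)
qed

end
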